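(* Fix $\epsilon>0$ arbitrary. (i) For each $l=0,2,3,4,\dots$, the equation $\lambda^2+\hat r_lG_l(\epsilon\lambda)=0$ has $l+2$ solutions, denoted $\lambda_{l,j}(\epsilon)$, $j=1,\dots,l+2$ (the deformation resonance energies). (ii) The set $\{\lambda_{l,j}(\epsilon)\}$ is symmetric about the imaginary axis (i.e. if $\lambda$ is a solution then so is $-\overline{\lambda}$), and every solution satisfies $\operatorname{Im}\lambda_{l,j}<0$.
   Context: Parameters $\mathrm{Ca}>0$, $\mathrm{We}>0$, $\gamma>1$. $h_l^{(1)}$ is the outgoing spherical Hankel function of order $l$ and $G_l(z)=z\,\partial h_l^{(1)}(z)/h_l^{(1)}(z)$. $\hat r_0=\frac{3\gamma}{2}\mathrm{Ca}+2(3\gamma-1)\frac{1}{\mathrm{We}}$ and $\hat r_l=\frac{1}{\mathrm{We}}(l+2)(l-1)$ for $l\ge1$. *)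

theory Defs
  imports "HOL-Complex_Analysis.Complex_Analysis"
begin

definition sph_hankel1 :: "nat \<Rightarrow> complex \<Rightarrow> complex" where
  "sph_hankel1 l z = (- \<i>) ^ (l + 1) * exp (\<i> * z) / z *
     (\<Sum>k\<le>l. (\<i> / (2 * z)) ^ k * (fact (l + k) / (fact k * fact (l - k))))"

definition G_fun :: "nat \<Rightarrow> complex \<Rightarrow> complex" where
  "G_fun l z = z * deriv (sph_hankel1 l) z / sph_hankel1 l z"

definition r_hat :: "real \<Rightarrow> real \<Rightarrow> real \<Rightarrow> nat \<Rightarrow> real" where
  "r_hat Ca We \<gamma> l =
     (if l = 0 then 3 * \<gamma> / 2 * Ca + 2 * (3 * \<gamma> - 1) * (1 / We)
      else (1 / We) * (real l + 2) * (real l - 1))"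

definition resonances :: "real \<Rightarrow> real \<Rightarrow> real \<Rightarrow> real \<Rightarrow> nat \<Rightarrow> complex set" where
  "resonances Ca We \<gamma> \<epsilon> l =
     {w. w \<noteq> 0 \<and> sph_hankel1 l (of_real \<epsilon> * w) \<noteq> 0 \<and>
          w\<^sup>2 + of_real (r_hat Ca We \<gamma> l) * G_fun l (of_real \<epsilon> * w) = 0}"

end

theory Submission
  imports Defs "HOL-Computational_Algebra.Fundamental_Theorem_Algebra"
begin


definition Acoef :: "nat \<Rightarrow> nat \<Rightarrow> real" where
  "Acoef l k = fact (l+k) / (fact k * fact (l-k))"

lemma Acoef_0 [simp]: "Acoef l 0 = 1" by (simp add: Acoef_def)

lemma one_plus_real_nz [simp]: "1 + real n \<noteq> (0::real)" by linarith

lemma Acoef_pos: "Acoef l k > 0" by (simp add: Acoef_def)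

lemma A1a: assumes "k < l"
  shows "Acoef (Suc l) (Suc k) = Acoef l (Suc k) + 2 * (real l + real k + 1) * Acoef l k"
proof -
  obtain m where l: "l = Suc k + m" using assms less_imp_Suc_add by blast
  define N where "N = k + k + m"
  have e1: "Suc l - Suc k = Suc m" "l - Suc k = m" "l - k = Suc m"
     "Suc l + Suc k = Suc (Suc (Suc N))" "l + Suc k = Suc (Suc N)" "l + k = Suc N" using l by (auto simp: N_def)
  have p: "real m + 1 \<noteq> 0" "real k + 1 \<noteq> 0" by linarith+
  show ?thesis unfolding Acoef_def e1
    by (simp only: fact_Suc of_nat_Suc) (simp add: l N_def divide_simps, simp add: algebra_simps)
qed

lemma A1b: "Acoef (Suc l) (Suc l) = 2 * (2 * real l + 1) * Acoef l l"
proof -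
  have e: "Suc l + Suc l = Suc (Suc (l+l))" by simp
  have p: "real l + 1 \<noteq> 0" by linarith
  show ?thesis unfolding Acoef_def e by (simp only: fact_Suc of_nat_Suc) (simp add: divide_simps, simp add: algebra_simps)
qed

lemma A2: assumes "k \<le> l"
  shows "Acoef (Suc l) k * (real l + 1 - real k) = (real l + 1 + real k) * Acoef l k"
proof -
  obtain m where l: "l = k + m" using assms le_Suc_ex by blast
  have e1: "Suc l - k = Suc m" "l - k = m" "Suc l + k = Suc (l + k)" using l by auto
  have p: "real m + 1 \<noteq> 0" by linarith
  show ?thesis unfolding Acoef_def e1
    by (simp only: fact_Suc of_nat_Suc) (simp add: l divide_simps, simp add: algebra_simps)
qed




definition bt :: complex where "bt = \<i> / 2"

definition Tp :: "nat \<Rightarrow> complex poly" where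
  "Tp l = (\<Sum>k\<le>l. monom (of_real (Acoef l k) * bt ^ k) (l - k))"

lemma coeff_Tp: "coeff (Tp l) j = (if j \<le> l then of_real (Acoef l (l - j)) * bt ^ (l - j) else 0)"
proof (cases "j \<le> l")
  case True
  have "coeff (Tp l) j = (\<Sum>k\<le>l. if k = l - j then of_real (Acoef l k) * bt ^ k else 0)"
    unfolding Tp_def coeff_sum coeff_monom
    by (rule sum.cong) (use True in auto)
  also have "\<dots> = of_real (Acoef l (l - j)) * bt ^ (l - j)"
    by (subst sum.delta) auto
  finally show ?thesis using True by simp
next
  case False
  then show ?thesis unfolding Tp_def coeff_sum coeff_monom by (auto intro!: sum.neutral)
qed

lemma bt_sq: "bt * bt = - 1/4" by (simp add: bt_def field_simps)
lemma i_bt: "\<i> = 2 * bt" by (simp add: bt_def)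
lemma bt_nz [simp]: "bt \<noteq> 0" by (simp add: bt_def)

lemma degree_Tp: "degree (Tp l) = l"
proof (rule antisym)
  show "degree (Tp l) \<le> l" by (rule degree_le) (simp add: coeff_Tp)
  show "l \<le> degree (Tp l)" by (rule le_degree) (simp add: coeff_Tp)
qed

lemma lead_Tp: "coeff (Tp l) l = 1" by (simp add: coeff_Tp)

lemma Tp_E: "Tp (Suc l) = pCons 0 (Tp l) + smult (\<i> * (2 * of_nat l + 1)) (Tp l)
     - smult \<i> (pCons 0 (pderiv (Tp l)))"
proof (rule poly_eqI)
  fix j
  show "coeff (Tp (Suc l)) j = coeff (pCons 0 (Tp l) + smult (\<i> * (2 * of_nat l + 1)) (Tp l)
     - smult \<i> (pCons 0 (pderiv (Tp l)))) j"
  proof (cases j)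
    case 0
    have "Acoef (Suc l) (Suc l) = 2 * (2 * real l + 1) * Acoef l l" by (rule A1b)
    hence "of_real (Acoef (Suc l) (Suc l)) = (2 * (2 * of_nat l + 1) * of_real (Acoef l l) :: complex)"
      by (metis (mono_tags, lifting) of_real_mult of_real_of_nat_eq of_real_add of_real_1 of_real_numeral)
    then show ?thesis using 0 by (simp add: coeff_Tp i_bt algebra_simps)
  next
    case (Suc n)
    consider "n < l" | "n = l" | "n > l" by linarith
    then show ?thesis
    proof cases
      case 1
      define m where "m = l - Suc n"
      have m: "l - n = Suc m" "Suc l - Suc n = Suc m" "m < l" "(of_nat n::complex) = of_nat l - of_nat m - 1" "l - Suc n = m" using 1 by (auto simp: m_def)
      have A: "of_real (Acoef (Suc l) (Suc m)) = (of_real (Acoef l (Suc m)) + 2 * (of_nat l + of_nat m + 1) * of_real (Acoef l m) :: complex)"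
        using A1a[OF m(3)] by (metis (mono_tags, lifting) of_real_mult of_real_of_nat_eq of_real_add of_real_1 of_real_numeral)
      show ?thesis using 1 Suc
        by (simp add: coeff_Tp coeff_pderiv m A i_bt algebra_simps)
    next
      case 2
      then show ?thesis using Suc by (simp add: coeff_Tp coeff_pderiv)
    next
      case 3
      then show ?thesis using Suc by (simp add: coeff_Tp coeff_pderiv)
    qed
  qed
qed

lemma bt_sq2: "bt * (bt * x) = - x / 4" using bt_sq by (metis mult.assoc mult_minus_left divide_inverse mult_1 times_divide_eq_left)

lemma ofr_eq: "(a::real) = b \<Longrightarrow> (of_real a :: complex) = of_real b" by simp

lemma Tp_D: "pderiv (Tp (Suc l)) = smult \<i> (pCons 0 (Tp l)) - smult \<i> (Tp (Suc l))"
proof (rule poly_eqI)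
  fix j
  show "coeff (pderiv (Tp (Suc l))) j = coeff (smult \<i> (pCons 0 (Tp l)) - smult \<i> (Tp (Suc l))) j"
  proof (cases j)
    case 0
    have a: "(of_real (Acoef (Suc l) (Suc l)) :: complex) = 2 * (2 * of_nat l + 1) * of_real (Acoef l l)"
      using ofr_eq[OF A1b[of l]] by simp
    have b: "(of_real (Acoef (Suc l) l) :: complex) = (2 * of_nat l + 1) * of_real (Acoef l l)"
      using ofr_eq[OF A2[of l l]] by simp
    have e: "Suc l - l = 1" by simp
    show ?thesis using 0 by (simp add: coeff_Tp coeff_pderiv a b e i_bt algebra_simps bt_sq2)
  next
    case (Suc n)
    consider "n < l" | "n = l" | "n > l" by linarith
    then show ?thesis
    proof cases
      case 1
      define m where "m = l - Suc n"
      have m: "l - n = Suc m" "Suc l - Suc n = Suc m" "m < l" "(of_nat n::complex) = of_nat l - of_nat m - 1" "l - Suc n = m" using 1 by (auto simp: m_def)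
      have A: "of_real (Acoef (Suc l) (Suc m)) = (of_real (Acoef l (Suc m)) + 2 * (of_nat l + of_nat m + 1) * of_real (Acoef l m) :: complex)"
        using ofr_eq[OF A1a[OF m(3)]] by simp
      have B: "of_real (Acoef (Suc l) m) * (of_nat l + 1 - of_nat m) = ((of_nat l + 1 + of_nat m) * of_real (Acoef l m) :: complex)"
        using ofr_eq[OF A2[of m l]] m(3) by simp
      have B': "bt^m * (of_real (Acoef (Suc l) m) * (of_nat l + 1 - of_nat m)) = bt^m * ((of_nat l + 1 + of_nat m) * of_real (Acoef l m) :: complex)"
        using B by simp
      show ?thesis using 1 Suc B'
        by (simp add: coeff_Tp coeff_pderiv m A i_bt algebra_simps bt_sq2)
    next
      case 2
      then show ?thesis using Suc by (simp add: coeff_Tp coeff_pderiv)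
    next
      case 3
      then show ?thesis using Suc by (simp add: coeff_Tp coeff_pderiv)
    qed
  qed
qed




abbreviation T where "T l z \<equiv> poly (Tp l) z"
abbreviation T' where "T' l z \<equiv> poly (pderiv (Tp l)) z"

lemma poly_Tp: "T l z = (\<Sum>k\<le>l. of_real (Acoef l k) * bt ^ k * z ^ (l - k))"
  by (simp add: Tp_def poly_sum poly_monom)

lemma Tp_0 [simp]: "Tp 0 = 1" by (simp add: Tp_def)

lemma T_E: "T (Suc l) z = (z + \<i> * (2 * of_nat l + 1)) * T l z - \<i> * z * T' l z"
  by (subst Tp_E) (simp add: algebra_simps)

lemma T_D: "T' (Suc l) z = \<i> * z * T l z - \<i> * T (Suc l) z"
  by (subst Tp_D) (simp add: algebra_simps)

lemma sym_term: assumes "k \<le> l" and cb: "cnj b = -b"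
  shows "of_real A * b ^ k * (- cnj z) ^ (l - k) = (- 1) ^ l * cnj (complex_of_real A * b ^ k * z ^ (l - k))"
proof -
  have 0: "(-1::complex)^l = (-1)^k * (-1)^(l-k)" using assms by (simp add: power_add[symmetric])
  have 1: "(- cnj z)^(l-k) = (-1)^(l-k) * cnj z^(l-k)" by (rule power_minus)
  have 2: "cnj (b^k) = (-1)^k * b^k" by (simp add: cb power_minus[of b])
  have 3: "(-1::complex)^k * (-1)^k = 1" by (simp add: power_add[symmetric])
  have "(- 1) ^ l * cnj (complex_of_real A * b ^ k * z ^ (l - k)) = ((-1)^k * (-1)^k) * (of_real A * b^k * ((-1)^(l-k) * cnj z^(l-k)))"
    unfolding 0 complex_cnj_mult 2 by (simp only: complex_cnj_complex_of_real complex_cnj_power mult_ac)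
  then show ?thesis unfolding 3 1 mult_1_left by (rule sym)
qed

lemma T_sym: "T l (- cnj z) = (-1) ^ l * cnj (T l z)"
proof -
  have "T l (- cnj z) = (\<Sum>k\<le>l. (-1)^l * cnj (of_real (Acoef l k) * bt ^ k * z ^ (l - k)))"
    unfolding poly_Tp
  proof (rule sum.cong[OF refl])
    fix k assume k: "k \<in> {..l}"
    have cb: "cnj bt = - bt" by (simp add: bt_def)
    then show "of_real (Acoef l k) * bt ^ k * (- cnj z) ^ (l - k) =
      (- 1) ^ l * cnj (complex_of_real (Acoef l k) * bt ^ k * z ^ (l - k))"
      using sym_term[of k l bt "Acoef l k" z] k cb by simp
  qed
  also have "\<dots> = (-1)^l * cnj (T l z)" by (simp add: poly_Tp sum_distrib_left)
  finally show ?thesis .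
qed

lemma hankel_rep: assumes "z \<noteq> 0"
  shows "sph_hankel1 l z = (-\<i>)^(l+1) * exp (\<i> * z) * T l z / z^(l+1)"
proof -
  have "(\<Sum>k\<le>l. (\<i> / (2 * z)) ^ k * (fact (l + k) / (fact k * fact (l - k)))) = T l z / z^l"
    unfolding poly_Tp sum_divide_distrib
  proof (rule sum.cong[OF refl])
    fix k assume k: "k \<in> {..l}"
    have e: "z ^ l = z ^ k * z ^ (l - k)" using k by (simp add: power_add[symmetric])
    have f: "(fact (l + k) / (fact k * fact (l - k)) :: complex) = of_real (Acoef l k)"
      by (simp add: Acoef_def)
    show "(\<i> / (2 * z)) ^ k * (fact (l + k) / (fact k * fact (l - k))) =
         of_real (Acoef l k) * bt ^ k * z ^ (l - k) / z ^ l"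
    proof -
      have g: "\<i> / (2 * z) = bt / z" by (simp add: bt_def)
      have zk: "z^k \<noteq> 0" "z^(l-k) \<noteq> 0" using assms by auto
      show ?thesis unfolding f e g power_divide using zk by (simp add: field_simps)
    qed
  qed
  then show ?thesis unfolding sph_hankel1_def using assms by (simp add: field_simps)
qed

lemma G_formula: assumes "z \<noteq> 0" "T l z \<noteq> 0"
  shows "G_fun l z = \<i> * z + z * T' l z / T l z - of_nat (l+1)"
proof -
  define H where "H = (\<lambda>z. (-\<i>)^(l+1) * exp (\<i> * z) * T l z / z^(l+1))"
  have HD: "(H has_field_derivative H z * (\<i> + T' l z / T l z - of_nat (l+1) / z)) (at z)"
  proof -
    have d1: "((\<lambda>z. (-\<i>)^(l+1) * exp (\<i> * z) * T l z) has_field_derivative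
         (-\<i>)^(l+1) * (\<i> * exp (\<i> * z) * T l z + exp (\<i> * z) * T' l z)) (at z)"
      by (auto intro!: derivative_eq_intros simp: algebra_simps)
    have d2: "((\<lambda>z. z^(l+1)) has_field_derivative of_nat (l+1) * z^l) (at z)"
      using DERIV_power[OF DERIV_ident, where n="l+1" and x=z and s=UNIV] by simp
    have "(H has_field_derivative ((-\<i>)^(l+1) * (\<i> * exp (\<i> * z) * T l z + exp (\<i> * z) * T' l z) * z^(l+1)
       - (-\<i>)^(l+1) * exp (\<i> * z) * T l z * (of_nat (l+1) * z^l)) / (z^(l+1) * z^(l+1))) (at z)"
      unfolding H_def using DERIV_divide[OF d1 d2] assms by simp
    moreover have "((-\<i>)^(l+1) * (\<i> * exp (\<i> * z) * T l z + exp (\<i> * z) * T' l z) * z^(l+1)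
       - (-\<i>)^(l+1) * exp (\<i> * z) * T l z * (of_nat (l+1) * z^l)) / (z^(l+1) * z^(l+1))
       = H z * (\<i> + T' l z / T l z - of_nat (l+1) / z)"
      unfolding H_def using assms by (simp add: field_simps power_Suc)
    ultimately show ?thesis by simp
  qed
  have "deriv (sph_hankel1 l) z = deriv H z"
  proof (rule deriv_cong_ev[OF _ refl])
    have "eventually (\<lambda>x. x \<in> -{0}) (nhds z)" using assms by (intro eventually_nhds_in_open) auto
    then show "eventually (\<lambda>x. sph_hankel1 l x = H x) (nhds z)"
      by eventually_elim (simp add: H_def hankel_rep)
  qed
  also have "\<dots> = H z * (\<i> + T' l z / T l z - of_nat (l+1) / z)" using HD by (rule DERIV_imp_deriv)
  finally have d: "deriv (sph_hankel1 l) z = H z * (\<i> + T' l z / T l z - of_nat (l+1) / z)" .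
  have hz: "sph_hankel1 l z = H z" using assms by (simp add: H_def hankel_rep)
  have Hnz: "H z \<noteq> 0" using assms by (simp add: H_def)
  show ?thesis unfolding G_fun_def d hz using assms Hnz by (simp add: field_simps)
qed

lemma hankel_nz_iff: "z \<noteq> 0 \<Longrightarrow> sph_hankel1 l z \<noteq> 0 \<longleftrightarrow> T l z \<noteq> 0"
  by (simp add: hankel_rep)




definition Fv :: "nat \<Rightarrow> complex \<Rightarrow> complex" where
  "Fv l z = \<i> * z + z * T' l z / T l z"

lemma Fv_0 [simp]: "Fv 0 z = \<i> * z" by (simp add: Fv_def)

lemma Frec: "T (Suc l) z \<noteq> 0 \<Longrightarrow> Fv (Suc l) z = \<i> * z^2 * T l z / T (Suc l) z"
  unfolding Fv_def T_D by (simp add: field_simps power2_eq_square)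

lemma Tstep: "T l z \<noteq> 0 \<Longrightarrow> T (Suc l) z = \<i> * T l z * ((2 * of_nat l + 1) - Fv l z)"
  unfolding Fv_def T_E by (simp add: field_simps)

lemma no_common_zero: "z \<noteq> 0 \<Longrightarrow> T l z = 0 \<Longrightarrow> T' l z = 0 \<Longrightarrow> False"
proof (induction l)
  case 0 then show ?case by simp
next
  case (Suc l)
  from Suc.prems T_D[of l z] have a: "T l z = 0" by simp
  from Suc.prems T_E[of l z] a have "T' l z = 0" by simp
  with a Suc show ?case by blast
qed

lemma Fv_sym: assumes "T l z \<noteq> 0" shows "Fv l (- cnj z) = cnj (Fv l z)"
proof (cases l)
  case 0 then show ?thesis by simp
next
  case (Suc m)
  have n: "T (Suc m) (- cnj z) \<noteq> 0" using assms Suc by (simp add: T_sym)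
  show ?thesis using assms unfolding Suc Frec[OF n] Frec[OF assms[unfolded Suc]] T_sym
    by (simp add: field_simps power2_eq_square)
qed




lemma H1:
  fixes z :: complex and a b c :: real
  assumes y: "Im z > 0" and a: "a \<ge> 0" and b: "b \<ge> 0" and c: "c > 0"
  shows "of_real c - (of_real b * z^2 - of_real a) \<noteq> 0 \<and>
    (\<exists>a' b'. a' \<ge> 0 \<and> b' \<ge> 0 \<and> z^2 / (of_real c - (of_real b * z^2 - of_real a)) = of_real b' * z^2 - of_real a')"
proof -
  define d where "d = c + a"
  have d: "d > 0" using a c by (simp add: d_def)
  define u where "u = of_real d - of_real b * z^2"
  have ueq: "of_real c - (of_real b * z^2 - of_real a) = u" by (simp add: u_def d_def)
  have unz: "u \<noteq> 0"
  proof
    assume u0: "u = 0"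
    have re: "d - b * (Re z ^ 2 - Im z ^ 2) = 0" using arg_cong[OF u0, of Re] by (simp add: u_def power2_eq_square)
    have im: "b * (2 * Re z * Im z) = 0" using arg_cong[OF u0, of Im] by (simp add: u_def power2_eq_square) blast
    show False
    proof (cases "b = 0")
      case True then show False using re d by simp
    next
      case False
      then have "Re z = 0" using im y by simp
      then have "d + b * (Im z)^2 = 0" using re by simp
      moreover have "b * (Im z)^2 \<ge> 0" using b by simp
      ultimately show False using d by linarith
    qed
  qed
  define D where "D = (cmod u)^2"
  have Dpos: "D > 0" using unz by (simp add: D_def)
  have uc: "u * cnj u = of_real D" unfolding D_def by (rule complex_norm_square[symmetric])
  have zz: "z^2 * cnj (z^2) = of_real ((cmod z)^4)"
  proof -
    have "z^2 * cnj (z^2) = (z * cnj z)^2" by (simp add: power_mult_distrib)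
    also have "\<dots> = (of_real ((cmod z)^2))^2" by (simp only: complex_norm_square)
    also have "\<dots> = of_real ((cmod z)^4)" by simp
    finally show ?thesis .
  qed
  have "z^2 / u = z^2 * cnj u / of_real D"
    using unz Dpos uc by (simp add: field_simps)
  also have "\<dots> = of_real (d / D) * z^2 - of_real (b * (cmod z)^4 / D)"
    unfolding u_def using Dpos zz[symmetric] by (simp add: field_simps)
  finally have "z^2 / u = of_real (d / D) * z^2 - of_real (b * (cmod z)^4 / D)" .
  moreover have "d / D \<ge> 0" "b * (cmod z)^4 / D \<ge> 0" using d Dpos b by auto
  ultimately show ?thesis using unz unfolding ueq by blast
qed

lemma H2:
  fixes z w :: complex and c :: real
  assumes y: "Im z = 0" and w: "Im w * Re z > 0"
  shows "of_real c - w \<noteq> 0 \<and> Im (z^2 / (of_real c - w)) * Re z > 0"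
proof -
  have imw: "Im w \<noteq> 0" using w by auto
  have nz: "of_real c - w \<noteq> 0" using imw by (auto simp: complex_eq_iff)
  define D where "D = (Re (of_real c - w))^2 + (Im (of_real c - w))^2"
  have Dp: "D > 0" using imw by (simp add: D_def sum_power2_gt_zero_iff)
  have "Im (z^2 / (of_real c - w)) = (Re z)^2 * Im w / D"
    using y by (simp add: Im_divide D_def power2_eq_square)
  then have "Im (z^2 / (of_real c - w)) * Re z = (Re z)^2 * (Im w * Re z) / D" by simp
  moreover have "(Re z)^2 * (Im w * Re z) / D > 0" using w Dp
    by (metis divide_pos_pos mult_pos_pos not_less_iff_gr_or_eq power2_less_0 w zero_less_power2 zero_less_mult_iff mult_zero_right mult_zero_left)
  ultimately show ?thesis using nz by simp
qed

lemma UH: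
  assumes "z \<noteq> 0" "Im z \<ge> 0"
  shows "T l z \<noteq> 0 \<and> (Im z > 0 \<longrightarrow> (\<exists>a b. a \<ge> 0 \<and> b \<ge> 0 \<and> Fv l z = of_real b * z^2 - of_real a))
     \<and> (Im z = 0 \<longrightarrow> Im (Fv l z) * Re z > 0)"
proof (induction l)
  case 0
  have "Im z > 0 \<longrightarrow> (\<exists>a b. a \<ge> 0 \<and> b \<ge> 0 \<and> \<i> * z = of_real b * z^2 - of_real a)"
  proof
    assume y: "Im z > 0"
    show "\<exists>a b. a \<ge> 0 \<and> b \<ge> 0 \<and> \<i> * z = of_real b * z^2 - of_real a"
    proof (intro exI conjI)
      show "((Re z)^2 + (Im z)^2) / (2 * Im z) \<ge> 0" "1 / (2 * Im z) \<ge> 0" using y by auto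
      show "\<i> * z = of_real (1 / (2 * Im z)) * z^2 - of_real (((Re z)^2 + (Im z)^2) / (2 * Im z))"
        using y by (simp add: complex_eq_iff power2_eq_square field_simps)
    qed
  qed
  moreover have "Im z = 0 \<longrightarrow> Im (\<i> * z) * Re z > 0"
  proof
    assume "Im z = 0"
    then have "Re z \<noteq> 0" using assms(1) complex_eq_iff by auto
    then have "Re z * Re z > 0" by (auto simp: zero_less_mult_iff)
    then show "Im (\<i> * z) * Re z > 0" by simp
  qed
  ultimately show ?case by simp
next
  case (Suc l)
  have Tl: "T l z \<noteq> 0" using Suc by blast
  define c :: real where "c = 2 * real l + 1"
  have cpos: "c > 0" by (simp add: c_def)
  have cc: "(2 * of_nat l + 1 :: complex) = of_real c" by (simp add: c_def)
  have TS: "T (Suc l) z = \<i> * T l z * (of_real c - Fv l z)" using Tstep[OF Tl] cc by simp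
  have nzc: "of_real c - Fv l z \<noteq> 0"
  proof (cases "Im z > 0")
    case True
    then obtain a b where ab: "a \<ge> 0" "b \<ge> 0" "Fv l z = of_real b * z^2 - of_real a" using Suc by blast
    show ?thesis using H1[OF True ab(1,2) cpos] ab(3) by simp
  next
    case False
    then have "Im z = 0" using assms by simp
    then show ?thesis using H2[of z "Fv l z" c] Suc by blast
  qed
  have TSnz: "T (Suc l) z \<noteq> 0" using TS Tl nzc by simp
  have FS: "Fv (Suc l) z = z^2 / (of_real c - Fv l z)"
    unfolding Frec[OF TSnz] TS using Tl nzc by (simp add: field_simps)
  show ?case
  proof (intro conjI impI)
    show "T (Suc l) z \<noteq> 0" by fact
  next
    assume y: "Im z > 0"
    then obtain a b where ab: "a \<ge> 0" "b \<ge> 0" "Fv l z = of_real b * z^2 - of_real a" using Suc by blast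
    show "\<exists>a b. a \<ge> 0 \<and> b \<ge> 0 \<and> Fv (Suc l) z = of_real b * z^2 - of_real a"
      using H1[OF y ab(1,2) cpos] unfolding FS ab(3) by blast
  next
    assume y: "Im z = 0"
    show "Im (Fv (Suc l) z) * Re z > 0" unfolding FS using H2[OF y, of "Fv l z" c] Suc y by blast
  qed
qed




lemma r_pos: assumes "Ca > 0" "We > 0" "\<gamma> > 1" "l \<noteq> 1"
  shows "r_hat Ca We \<gamma> l > 0"
proof (cases "l = 0")
  case True
  have "3 * \<gamma> / 2 * Ca + 2 * (3 * \<gamma> - 1) * (1 / We) > 0"
    by (rule add_pos_pos) (use assms in simp)+
  then show ?thesis using True unfolding r_hat_def by simp
next
  case False
  then have "l \<ge> 2" using assms(4) by linarith
  then have "real l - 1 > 0" by simp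
  then show ?thesis using False assms by (simp add: r_hat_def)
qed

lemma sq_pos_real: assumes "w^2 = of_real s" "s > 0" shows "Im w = 0"
proof (rule ccontr)
  assume n: "Im w \<noteq> 0"
  have im: "2 * Re w * Im w = 0" using arg_cong[OF assms(1), of Im] by (simp add: power2_eq_square) blast
  then have "Re w = 0" using n by simp
  then have "(Im w)^2 + s = 0" using arg_cong[OF assms(1), of Re] by (simp add: power2_eq_square)
  moreover have "(Im w)^2 \<ge> 0" by simp
  ultimately show False using assms(2) by linarith
qed

lemma f_form:
  assumes "z \<noteq> 0" "T l z \<noteq> 0"
  shows "G_fun l z = Fv l z - of_nat (l+1)"
  using G_formula[OF assms] by (simp add: Fv_def)

lemma Im_neg:
  fixes r \<epsilon> :: real and w :: complex
  assumes r: "r > 0" and e: "\<epsilon> > 0" and w: "w \<noteq> 0"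
    and eq: "w^2 + of_real r * (Fv l (of_real \<epsilon> * w) - of_nat (l+1)) = 0"
  shows "Im w < 0"
proof (rule ccontr)
  assume "\<not> Im w < 0"
  then have iw: "Im w \<ge> 0" by simp
  define z where "z = of_real \<epsilon> * w"
  have z0: "z \<noteq> 0" using w e by (simp add: z_def)
  have iz: "Im z = \<epsilon> * Im w" by (simp add: z_def)
  have U: "T l z \<noteq> 0 \<and> (Im z > 0 \<longrightarrow> (\<exists>a b. a \<ge> 0 \<and> b \<ge> 0 \<and> Fv l z = of_real b * z^2 - of_real a))
     \<and> (Im z = 0 \<longrightarrow> Im (Fv l z) * Re z > 0)" using UH[OF z0] iz iw e by simp
  show False
  proof (cases "Im w > 0")
    case True
    then have "Im z > 0" using iz e by simp
    then obtain a b where ab: "a \<ge> 0" "b \<ge> 0" "Fv l z = of_real b * z^2 - of_real a" using U by blast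
    have F: "Fv l z = of_real (b*\<epsilon>^2) * w^2 - of_real a" using ab(3) unfolding z_def by (simp add: power_mult_distrib)
    have eq': "w^2 + of_real r * (of_real (b*\<epsilon>^2) * w^2 - of_real a - of_nat (l+1)) = (0::complex)"
      using eq unfolding z_def[symmetric] F .
    have "w^2 * of_real (1 + r * b * \<epsilon>^2) - of_real (r * (a + real l + 1)) = w^2 + of_real r * (of_real (b*\<epsilon>^2) * w^2 - of_real a - of_nat (l+1))"
      by (simp add: algebra_simps)
    then have W: "w^2 * of_real (1 + r * b * \<epsilon>^2) = of_real (r * (a + real l + 1))" using eq' by simp
    have pos: "1 + r * b * \<epsilon>^2 > 0" using r ab(2) by (simp add: add_pos_nonneg)
    then have "w^2 = of_real (r * (a + real l + 1)) / of_real (1 + r * b * \<epsilon>^2)"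
    proof -
      have nz: "(of_real (1 + r * b * \<epsilon>^2) :: complex) \<noteq> 0" using pos by (simp only: of_real_eq_0_iff)
      show ?thesis by (subst nonzero_eq_divide_eq[OF nz]) (rule W)
    qed
    then have "w^2 = of_real (r * (a + real l + 1) / (1 + r * b * \<epsilon>^2))" by simp
    moreover have "r * (a + real l + 1) / (1 + r * b * \<epsilon>^2) > 0" using r ab pos by simp
    ultimately have "Im w = 0" by (rule sq_pos_real)
    then show False using True by simp
  next
    case False
    then have w0: "Im w = 0" using iw by simp
    then have "Im z = 0" using iz by simp
    then have p: "Im (Fv l z) * Re z > 0" using U by blast
    have "Im (w^2) = 0" using w0 by (simp add: power2_eq_square)
    then have "r * Im (Fv l z) = 0" using arg_cong[OF eq, of Im] unfolding z_def[symmetric] by simp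
    then show False using p r by simp
  qed
qed

lemma T_at_0: "T l 0 \<noteq> 0"
proof -
  have "T l 0 = of_real (Acoef l l) * bt ^ l" by (simp add: poly_0_coeff_0 coeff_Tp)
  moreover have "Acoef l l > 0" by (rule Acoef_pos)
  ultimately show ?thesis by simp
qed

theorem theorem6p1:
  fixes Ca We \<gamma> \<epsilon> :: real and l :: nat
  assumes "Ca > 0" and "We > 0" and "\<gamma> > 1" and "\<epsilon> > 0" and "l \<noteq> 1"
  shows "finite (resonances Ca We \<gamma> \<epsilon> l)
    \<and> (\<Sum>w\<in>resonances Ca We \<gamma> \<epsilon> l.
          zorder (\<lambda>z. z\<^sup>2 + of_real (r_hat Ca We \<gamma> l) * G_fun l (of_real \<epsilon> * z)) w)
        = int (l + 2)
    \<and> (\<forall>w\<in>resonances Ca We \<gamma> \<epsilon> l. - cnj w \<in> resonances Ca We \<gamma> \<epsilon> l)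
    \<and> (\<forall>w\<in>resonances Ca We \<gamma> \<epsilon> l. Im w < 0)"
proof -
  define r where "r = r_hat Ca We \<gamma> l"
  have rpos: "r > 0" unfolding r_def using r_pos assms by blast
  have e: "\<epsilon> > 0" by fact
  define f where "f = (\<lambda>z. z\<^sup>2 + of_real r * G_fun l (of_real \<epsilon> * z))"
  define Q where "Q = pcompose (Tp l) [:0, of_real \<epsilon>:]"
  define Dq where "Dq = pcompose (pderiv (Tp l)) [:0, of_real \<epsilon>:]"
  define P where "P = pCons 0 (pCons 0 Q) + smult (of_real r) (pCons 0 (smult (\<i> * of_real \<epsilon>) Q + smult (of_real \<epsilon>) Dq) - smult (of_nat (l+1)) Q)"
  have polyQ: "poly Q z = T l (of_real \<epsilon> * z)" for z by (simp add: Q_def poly_pcompose mult.commute)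
  have polyD: "poly Dq z = T' l (of_real \<epsilon> * z)" for z by (simp add: Dq_def poly_pcompose mult.commute)
  have polyP: "poly P z = z^2 * poly Q z + of_real r * (z * (\<i> * of_real \<epsilon> * poly Q z + of_real \<epsilon> * poly Dq z) - of_nat (l+1) * poly Q z)" for z
    by (simp add: P_def algebra_simps power2_eq_square)
  have fP: "f z = poly P z / poly Q z" if z: "z \<noteq> 0" "poly Q z \<noteq> 0" for z
  proof -
    have ez: "of_real \<epsilon> * z \<noteq> 0" using z e by simp
    have Tz: "T l (of_real \<epsilon> * z) \<noteq> 0" using z polyQ by simp
    show ?thesis unfolding f_def f_form[OF ez Tz] Fv_def polyP polyD polyQ
      using Tz by (simp add: field_simps power2_eq_square)
  qed
  have P0: "poly P 0 \<noteq> 0"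
    using rpos T_at_0[of l] of_nat_neq_0[of l, where 'a=complex] by (simp add: polyP polyQ)
  then have Pnz: "P \<noteq> 0" by auto
  have roots_good: "w \<noteq> 0 \<and> poly Q w \<noteq> 0" if w: "poly P w = 0" for w
  proof -
    have w0: "w \<noteq> 0" using w P0 by auto
    moreover have "poly Q w \<noteq> 0"
    proof
      assume q: "poly Q w = 0"
      then have "of_real r * (w * (of_real \<epsilon> * poly Dq w)) = 0" using w by (simp add: polyP)
      then have "T' l (of_real \<epsilon> * w) = 0" using rpos w0 e by (simp add: polyD)
      moreover have "T l (of_real \<epsilon> * w) = 0" using q polyQ by simp
      moreover have "of_real \<epsilon> * w \<noteq> 0" using w0 e by simp
      ultimately show False using no_common_zero by blast
    qed
    ultimately show ?thesis by blast
  qed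
  have hk: "sph_hankel1 l (of_real \<epsilon> * w) \<noteq> 0 \<longleftrightarrow> poly Q w \<noteq> 0" if "w \<noteq> 0" for w
    using hankel_nz_iff[of "of_real \<epsilon> * w" l] that e by (simp add: polyQ)
  have res_eq: "resonances Ca We \<gamma> \<epsilon> l = {w. poly P w = 0}"
  proof (intro set_eqI iffI)
    fix w assume "w \<in> resonances Ca We \<gamma> \<epsilon> l"
    then have w: "w \<noteq> 0" "poly Q w \<noteq> 0" "f w = 0"
      unfolding resonances_def f_def r_def using hk by auto
    then show "w \<in> {w. poly P w = 0}" using fP[OF w(1,2)] by simp
  next
    fix w assume "w \<in> {w. poly P w = 0}"
    then have w: "poly P w = 0" by simp
    from roots_good[OF w] have g: "w \<noteq> 0" "poly Q w \<noteq> 0" by auto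
    have "f w = 0" using fP[OF g] w by simp
    then show "w \<in> resonances Ca We \<gamma> \<epsilon> l"
      unfolding resonances_def f_def r_def using g hk by auto
  qed
  have fin: "finite (resonances Ca We \<gamma> \<epsilon> l)" unfolding res_eq using poly_roots_finite[OF Pnz] .
  have cQ: "coeff Q j = of_real \<epsilon> ^ j * coeff (Tp l) j" for j by (simp add: Q_def coeff_pcompose_linear)
  have cD: "coeff Dq j = of_real \<epsilon> ^ j * (of_nat (Suc j) * coeff (Tp l) (Suc j))" for j
    by (simp add: Dq_def coeff_pcompose_linear coeff_pderiv)
  have Qnz: "Q \<noteq> 0"
  proof
    assume "Q = 0"
    then have "coeff Q l = 0" by simp
    then show False using e by (simp add: cQ lead_Tp)
  qed
  have degQ: "degree Q = l" using e by (simp add: Q_def degree_pcompose degree_Tp)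
  define R where "R = smult (of_real r) (pCons 0 (smult (\<i> * of_real \<epsilon>) Q + smult (of_real \<epsilon>) Dq) - smult (of_nat (l+1)) Q)"
  have PR: "P = pCons 0 (pCons 0 Q) + R" by (simp add: P_def R_def)
  have degR: "degree R \<le> l + 1"
  proof (rule degree_le, intro allI impI)
    fix j assume j: "l + 1 < j"
    then obtain n where n: "j = Suc n" "n > l" by (cases j) auto
    show "coeff R j = 0" using n by (simp add: R_def cQ cD coeff_Tp)
  qed
  have degA: "degree (pCons 0 (pCons 0 Q)) = l + 2" using Qnz degQ by simp
  have degP: "degree P = l + 2" unfolding PR using degR degA by (subst degree_add_eq_left) auto
  have zo: "zorder f w = int (order w P)" if w: "poly P w = 0" for w
  proof -
    obtain q where q: "P = [:- w, 1:] ^ order w P * q" "\<not> [:- w, 1:] dvd q"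
      using order_decomp[OF Pnz] by blast
    have qw: "poly q w \<noteq> 0" using q(2) by (simp add: poly_eq_0_iff_dvd)
    define S where "S = {z. z \<noteq> 0} \<inter> {z. poly Q z \<noteq> 0}"
    have "open {z::complex. z \<noteq> 0}" by (rule open_Collect_neq) (auto intro: continuous_intros)
    moreover have "open {z. poly Q z \<noteq> 0}" by (rule open_Collect_neq) (auto intro: continuous_intros)
    ultimately have So: "open S" unfolding S_def by auto
    have wS: "w \<in> S" using roots_good[OF w] by (simp add: S_def)
    have hol: "(\<lambda>z. poly q z / poly Q z) holomorphic_on S"
      unfolding S_def by (intro holomorphic_intros) auto
    show ?thesis
    proof (rule zorder_eqI[OF So wS hol])
      show "poly q w / poly Q w \<noteq> 0" using qw wS by (simp add: S_def)
      fix z assume z: "z \<in> S" "z \<noteq> w"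
      have "f z = poly P z / poly Q z" using z fP by (simp add: S_def)
      also have "\<dots> = poly q z / poly Q z * (z - w) ^ order w P"
        by (subst q(1)) (simp add: algebra_simps)
      finally show "f z = poly q z / poly Q z * (z - w) powi int (order w P)" by simp
    qed
  qed
  have sum: "(\<Sum>w\<in>resonances Ca We \<gamma> \<epsilon> l. zorder f w) = int (l + 2)"
  proof -
    have "(\<Sum>w\<in>resonances Ca We \<gamma> \<epsilon> l. zorder f w) = (\<Sum>w\<in>{w. poly P w = 0}. int (order w P))"
      unfolding res_eq by (rule sum.cong) (auto simp: zo)
    also have "\<dots> = int (\<Sum>w\<in>{w. poly P w = 0}. order w P)" by simp
    also have "(\<Sum>w\<in>{w. poly P w = 0}. order w P) = size (proots P)"
      using Pnz by (simp add: size_multiset_overloaded_eq)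
    also have "\<dots> = l + 2" using degP by (simp add: size_proots_complex)
    finally show ?thesis .
  qed
  have eqF: "w^2 + of_real r * (Fv l (of_real \<epsilon> * w) - of_nat (l+1)) = 0 \<and> T l (of_real \<epsilon> * w) \<noteq> 0 \<and> w \<noteq> 0"
    if w: "w \<in> resonances Ca We \<gamma> \<epsilon> l" for w
  proof -
    have w0: "w \<noteq> 0" and h: "sph_hankel1 l (of_real \<epsilon> * w) \<noteq> 0" and fw: "f w = 0"
      using w unfolding resonances_def f_def r_def by auto
    have ez: "of_real \<epsilon> * w \<noteq> 0" using w0 e by simp
    have T: "T l (of_real \<epsilon> * w) \<noteq> 0" using h hankel_nz_iff[OF ez] by simp
    show ?thesis using fw T w0 unfolding f_def f_form[OF ez T] by simp
  qed
  have symm: "- cnj w \<in> resonances Ca We \<gamma> \<epsilon> l" if w: "w \<in> resonances Ca We \<gamma> \<epsilon> l" for w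
  proof -
    note E = eqF[OF w]
    have c: "of_real \<epsilon> * (- cnj w) = - cnj (of_real \<epsilon> * w)" by simp
    have T2: "T l (of_real \<epsilon> * (- cnj w)) \<noteq> 0" unfolding c T_sym using E by simp
    have w2: "- cnj w \<noteq> 0" using E by simp
    have ez: "of_real \<epsilon> * (- cnj w) \<noteq> 0" using w2 e by simp
    have "f (- cnj w) = (- cnj w)^2 + of_real r * (Fv l (of_real \<epsilon> * (- cnj w)) - of_nat (l+1))"
      unfolding f_def f_form[OF ez T2] ..
    also have "\<dots> = cnj (w^2 + of_real r * (Fv l (of_real \<epsilon> * w) - of_nat (l+1)))"
      unfolding c Fv_sym[OF conjunct1[OF conjunct2[OF E]]] by simp
    also have "\<dots> = 0" using E by simp
    finally have "f (- cnj w) = 0" .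
    moreover have "sph_hankel1 l (of_real \<epsilon> * (- cnj w)) \<noteq> 0" using hankel_nz_iff[OF ez] T2 by simp
    ultimately show ?thesis using w2 unfolding resonances_def f_def r_def by simp
  qed
  have imneg: "Im w < 0" if w: "w \<in> resonances Ca We \<gamma> \<epsilon> l" for w
    using Im_neg[OF rpos e _] eqF[OF w] by blast
  show ?thesis using fin sum symm imneg unfolding f_def r_def by blast
qed


end
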